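(* Let $p,q,r,n$ be integers with $r\ge 0$, $q\ge 2$, $p-q=2r+1$, $n=p+q$, and suppose $q\ge 2r+1$. Then the integrality gap of the clique-web inequality with parameters $n,p,q,r$ is at most $2$, i.e. $\mathrm{sdp}(\mathrm{CW}^r_p,-e)/\mathrm{ip}(\mathrm{CW}^r_p,-e)\le 2$.
   Context: For integers $p,r$ with $p\ge 2r+3$, the antiweb $\mathrm{AW}^r_p$ is the graph on $[p]$ with edges $\{i,i+s\}$ for $i\in[p]$, $1\le s\le r$ (indices mod $p$); the web $\mathrm{W}^r_p$ is its complement in $K_p$. With $p,q,r,n$ as in the claim, $\mathrm{CW}^r_p$ is the graph on $[n]$ consisting of a clique on $\{1,\dots,q\}$, a copy of $\mathrm{W}^r_p$ on $\{q+1,\dots,n\}$, and all edges $ij$ with $1\le i\le q<j\le n$. The clique-web inequality is $-\sum_{ij\in E(\mathrm{CW}^r_p)}x_{ij}\le q(r+1)$. For a graph $G=([n],E)$ and $w\in\mathbb{R}^E$, $\mathrm{ip}(G,w)=\max_{x\in\{\pm1\}^n}\sum_{ij\in E}w_{ij}x_ix_j$ and $\mathrm{sdp}(G,w)=\max\sum_{ij\in E}w_{ij}u_i^Tu_j$ over unit vectors $u_i\in\mathbb{R}^n$; $e$ denotes the all-ones vector in $\mathbb{R}^{E(\mathrm{CW}^r_p)}$. The integrality gap of the clique-web inequality is $\mathrm{sdp}(\mathrm{CW}^r_p,-e)/\mathrm{ip}(\mathrm{CW}^r_p,-e)$, where $\mathrm{ip}(\mathrm{CW}^r_p,-e)=q(r+1)$.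 *)

theory Defs
  imports Complex_Main "HOL-Library.FuncSet"
begin

text \<open>Graphs on vertex set [n] = {1..n} are given by edge sets of ordered pairs (i,j) with i < j,
  each pair representing the undirected edge ij.\<close>

definition edge :: "nat \<Rightarrow> nat \<Rightarrow> nat \<times> nat" where
  "edge i j = (min i j, max i j)"

definition antiweb :: "nat \<Rightarrow> nat \<Rightarrow> (nat \<times> nat) set" where
  "antiweb p r = {edge i (((i + s - 1) mod p) + 1) | i s. i \<in> {1..p} \<and> 1 \<le> s \<and> s \<le> r}"

definition web :: "nat \<Rightarrow> nat \<Rightarrow> (nat \<times> nat) set" where
  "web p r = {(i, j). 1 \<le> i \<and> i < j \<and> j \<le> p} - antiweb p r"

definition clique_web :: "nat \<Rightarrow> nat \<Rightarrow> nat \<Rightarrow> (nat \<times> nat) set" where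
  "clique_web p q r =
     {(i, j). 1 \<le> i \<and> i < j \<and> j \<le> q}
   \<union> {(i + q, j + q) | i j. (i, j) \<in> web p r}
   \<union> {(i, j). 1 \<le> i \<and> i \<le> q \<and> q < j \<and> j \<le> p + q}"

definition ip :: "nat \<Rightarrow> (nat \<times> nat) set \<Rightarrow> (nat \<times> nat \<Rightarrow> real) \<Rightarrow> real" where
  "ip n E w = Max {(\<Sum>(i, j)\<in>E. w (i, j) * x i * x j) | x.
                    x \<in> {1..n} \<rightarrow>\<^sub>E {-1, 1}}"

definition sdp :: "nat \<Rightarrow> (nat \<times> nat) set \<Rightarrow> (nat \<times> nat \<Rightarrow> real) \<Rightarrow> real" where
  "sdp n E w = Sup {(\<Sum>(i, j)\<in>E. w (i, j) * (\<Sum>k<n. u i k * u j k)) | u.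
                     \<forall>i\<in>{1..n}. (\<Sum>k<n. (u i k)\<^sup>2) = 1}"

end

theory Submission
  imports Defs
begin

definition PP :: "nat \<Rightarrow> (nat \<times> nat) set" where
  "PP n = {(i,j). 1 \<le> i \<and> i < j \<and> j \<le> n}"

lemma PP_finite: "finite (PP n)"
proof -
  have "PP n \<subseteq> {1..n} \<times> {1..n}" unfolding PP_def by auto
  thus ?thesis by (rule finite_subset) auto
qed

lemma PP_Suc: "PP (Suc n) = PP n \<union> (\<lambda>i. (i, Suc n)) ` {1..n}"
  unfolding PP_def by auto

lemma pair_sum:
  fixes a :: "nat \<Rightarrow> real"
  shows "(\<Sum>(i,j)\<in>PP n. a i * a j) = ((\<Sum>i=1..n. a i)^2 - (\<Sum>i=1..n. (a i)^2)) / 2"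
proof (induction n)
  case 0
  have "PP 0 = {}" unfolding PP_def by auto
  thus ?case by simp
next
  case (Suc n)
  have disj: "PP n \<inter> (\<lambda>i. (i, Suc n)) ` {1..n} = {}" unfolding PP_def by auto
  have "(\<Sum>(i,j)\<in>PP (Suc n). a i * a j) = (\<Sum>(i,j)\<in>PP n. a i * a j) + (\<Sum>(i,j)\<in>(\<lambda>i. (i, Suc n)) ` {1..n}. a i * a j)"
    unfolding PP_Suc by (rule sum.union_disjoint) (auto simp: PP_finite disj, auto simp: PP_def)
  also have "(\<Sum>(i,j)\<in>(\<lambda>i. (i, Suc n)) ` {1..n}. a i * a j) = (\<Sum>i=1..n. a i * a (Suc n))"
    by (subst sum.reindex) (auto simp: inj_on_def)
  also have "\<dots> = (\<Sum>i=1..n. a i) * a (Suc n)" by (simp add: sum_distrib_right)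
  finally show ?case using Suc by (simp add: power2_eq_square algebra_simps add_divide_distrib diff_divide_distrib)
qed

definition gg :: "nat \<Rightarrow> nat \<Rightarrow> nat \<times> nat \<Rightarrow> nat \<times> nat" where
  "gg p r = (\<lambda>(i,s). edge i (((i + s - 1) mod p) + 1))"

lemma gg_eq:
  assumes "1 \<le> i" "i \<le> p" "1 \<le> s" "s \<le> r" "r < p"
  shows "gg p r (i,s) = (if i + s \<le> p then (i, i+s) else (i+s-p, i))"
proof (cases "i + s \<le> p")
  case True
  hence "(i + s - 1) mod p = i + s - 1" using assms by simp
  thus ?thesis using True assms by (simp add: gg_def edge_def)
next
  case False
  have "(i + s - 1) mod p = (i + s - 1 - p) mod p" using False by (simp add: le_mod_geq)
  also have "\<dots> = i + s - 1 - p" using assms by simp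
  finally show ?thesis using False assms by (simp add: gg_def edge_def)
qed

lemma antiweb_img: "antiweb p r = gg p r ` ({1..p} \<times> {1..r})"
  unfolding antiweb_def gg_def image_def by fastforce

lemma gg_inj: assumes "2 * r < p" shows "inj_on (gg p r) ({1..p} \<times> {1..r})"
proof (rule inj_onI)
  fix x y assume x: "x \<in> {1..p} \<times> {1..r}" and y: "y \<in> {1..p} \<times> {1..r}" and e: "gg p r x = gg p r y"
  obtain i s where xi: "x = (i,s)" by force
  obtain i' s' where yi: "y = (i',s')" by force
  show "x = y" using x y e assms unfolding xi yi
    by (simp add: gg_eq split: if_splits) linarith+
qed

lemma card_antiweb: assumes "2 * r < p" shows "card (antiweb p r) = p * r"
  unfolding antiweb_img using card_image[OF gg_inj[OF assms]] by simp

lemma antiweb_sub: assumes "r < p" shows "antiweb p r \<subseteq> {(i,j). 1 \<le> i \<and> i < j \<and> j \<le> p}"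
proof
  fix x assume "x \<in> antiweb p r"
  then obtain i s where "i \<in> {1..p}" "s \<in> {1..r}" "x = gg p r (i,s)" unfolding antiweb_img by auto
  thus "x \<in> {(i,j). 1 \<le> i \<and> i < j \<and> j \<le> p}" using assms by (auto simp: gg_eq)
qed

definition shA :: "nat \<Rightarrow> nat \<Rightarrow> nat \<Rightarrow> (nat \<times> nat) set" where
  "shA p q r = (\<lambda>(i,j). (i+q, j+q)) ` antiweb p r"

lemma shA_mem: "(a,b) \<in> shA p q r \<longleftrightarrow> q \<le> a \<and> q \<le> b \<and> (a-q, b-q) \<in> antiweb p r"
proof -
  have "(a,b) \<in> shA p q r \<longleftrightarrow> (\<exists>i j. (i,j) \<in> antiweb p r \<and> a = i+q \<and> b = j+q)"
    unfolding shA_def by auto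
  also have "\<dots> \<longleftrightarrow> q \<le> a \<and> q \<le> b \<and> (a-q, b-q) \<in> antiweb p r"
    by (auto, rule exI[of _ "a-q"], auto)
  finally show ?thesis .
qed

lemma shW_mem: "(a,b) \<in> {(i + q, j + q) | i j. (i, j) \<in> web p r} \<longleftrightarrow> q \<le> a \<and> q \<le> b \<and> (a-q, b-q) \<in> web p r"
proof -
  have "(a,b) \<in> {(i + q, j + q) | i j. (i, j) \<in> web p r} \<longleftrightarrow> (\<exists>i j. (i,j) \<in> web p r \<and> a = i+q \<and> b = j+q)"
    by auto
  also have "\<dots> \<longleftrightarrow> q \<le> a \<and> q \<le> b \<and> (a-q, b-q) \<in> web p r"
    by (auto, rule exI[of _ "a-q"], auto)
  finally show ?thesis .
qed

lemma shA_sub: assumes "r < p" shows "shA p q r \<subseteq> PP (p+q)"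
proof
  fix x assume "x \<in> shA p q r"
  moreover obtain a b where x: "x = (a,b)" by force
  ultimately have "q \<le> a" "q \<le> b" "(a-q, b-q) \<in> antiweb p r" by (auto simp: shA_mem)
  thus "x \<in> PP (p+q)" using antiweb_sub[OF assms] x by (auto simp: PP_def)
qed

lemma CW_eq: assumes "r < p" shows "clique_web p q r = PP (p+q) - shA p q r"
proof (rule set_eqI)
  fix x :: "nat \<times> nat"
  obtain a b where x: "x = (a,b)" by force
  have sub: "(a-q,b-q) \<in> antiweb p r \<Longrightarrow> 1 \<le> a-q \<and> a-q < b-q \<and> b-q \<le> p" using antiweb_sub[OF assms] by auto
  have web_mem: "(a-q,b-q) \<in> web p r \<longleftrightarrow> 1 \<le> a-q \<and> a-q < b-q \<and> b-q \<le> p \<and> (a-q,b-q) \<notin> antiweb p r"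
    by (simp add: web_def)
  have cw: "(a,b) \<in> clique_web p q r \<longleftrightarrow> (1 \<le> a \<and> a < b \<and> b \<le> q) \<or> (q \<le> a \<and> q \<le> b \<and> (a-q,b-q) \<in> web p r) \<or> (1 \<le> a \<and> a \<le> q \<and> q < b \<and> b \<le> p+q)"
    unfolding clique_web_def Un_iff shW_mem by simp
  have pp: "(a,b) \<in> PP (p+q) - shA p q r \<longleftrightarrow> (1 \<le> a \<and> a < b \<and> b \<le> p+q) \<and> \<not> (q \<le> a \<and> q \<le> b \<and> (a-q,b-q) \<in> antiweb p r)"
    unfolding Diff_iff shA_mem by (simp add: PP_def)
  show "x \<in> clique_web p q r \<longleftrightarrow> x \<in> PP (p+q) - shA p q r"
  proof (cases "(a-q,b-q) \<in> antiweb p r")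
    case True
    hence "1 \<le> a-q \<and> a-q < b-q \<and> b-q \<le> p" using sub by blast
    thus ?thesis unfolding x cw pp web_mem using True by linarith
  next
    case False
    thus ?thesis unfolding x cw pp web_mem by linarith
  qed
qed

lemma card_shA: assumes "2 * r < p" shows "card (shA p q r) = p * r"
proof -
  have "inj_on (\<lambda>(i,j). (i+q, j+q)) (antiweb p r)" by (auto simp: inj_on_def)
  thus ?thesis unfolding shA_def using card_image card_antiweb[OF assms] by metis
qed


lemma dot_le1:
  fixes u :: "nat \<Rightarrow> nat \<Rightarrow> real"
  assumes "(\<Sum>k<n. (u i k)^2) = 1" "(\<Sum>k<n. (u j k)^2) = 1"
  shows "(\<Sum>k<n. u i k * u j k) \<le> 1"
proof -
  have "(\<Sum>k<n. u i k * u j k) \<le> (\<Sum>k<n. ((u i k)^2 + (u j k)^2) / 2)"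
  proof (rule sum_mono)
    fix k
    have "0 \<le> (u i k - u j k)^2" by simp
    thus "u i k * u j k \<le> ((u i k)^2 + (u j k)^2) / 2" by (simp add: power2_eq_square algebra_simps)
  qed
  also have "\<dots> = 1" using assms by (simp add: sum.distrib sum_divide_distrib[symmetric])
  finally show ?thesis .
qed

lemma PP_dot:
  fixes u :: "nat \<Rightarrow> nat \<Rightarrow> real"
  assumes "\<forall>i\<in>{1..n}. (\<Sum>k<n. (u i k)^2) = 1"
  shows "(\<Sum>(i,j)\<in>PP n. (\<Sum>k<n. u i k * u j k)) \<ge> - real n / 2"
proof -
  have "(\<Sum>(i,j)\<in>PP n. (\<Sum>k<n. u i k * u j k)) = (\<Sum>k<n. \<Sum>(i,j)\<in>PP n. u i k * u j k)"
    by (simp add: split_def sum.swap[of _ "PP n"])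
  also have "\<dots> = (\<Sum>k<n. ((\<Sum>i=1..n. u i k)^2 - (\<Sum>i=1..n. (u i k)^2)) / 2)"
    by (simp add: pair_sum)
  also have "\<dots> \<ge> (\<Sum>k<n. - (\<Sum>i=1..n. (u i k)^2) / 2)"
    by (rule sum_mono) simp
  also have "(\<Sum>k<n. - (\<Sum>i=1..n. (u i k)^2) / 2) = - (\<Sum>i=1..n. \<Sum>k<n. (u i k)^2) / 2"
    by (simp add: sum_divide_distrib[symmetric] sum_negf sum.swap[of _ "{..<n}"])
  also have "(\<Sum>i=1..n. \<Sum>k<n. (u i k)^2) = (\<Sum>i=1..n. 1)" using assms by (intro sum.cong) auto
  finally show ?thesis by simp
qed

lemma sdp_val:
  fixes u :: "nat \<Rightarrow> nat \<Rightarrow> real"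
  assumes "\<forall>i\<in>{1..n}. (\<Sum>k<n. (u i k)^2) = 1" "n = p + q" "2 * r < p"
  shows "(\<Sum>(i,j)\<in>clique_web p q r. (-1) * (\<Sum>k<n. u i k * u j k)) \<le> real n / 2 + real (p * r)"
proof -
  define D where "D = (\<lambda>(i,j). (\<Sum>k<n. u i k * u j k))"
  have rp: "r < p" using assms by simp
  have eq: "(\<Sum>(i,j)\<in>clique_web p q r. (-1) * (\<Sum>k<n. u i k * u j k)) = - sum D (clique_web p q r)"
    by (simp add: D_def split_def sum_negf)
  have "sum D (clique_web p q r) = sum D (PP n) - sum D (shA p q r)"
    unfolding CW_eq[OF rp] assms(2) by (rule sum_diff) (auto simp: PP_finite shA_sub[OF rp])
  moreover have "sum D (PP n) \<ge> - real n / 2" using PP_dot[OF assms(1)] by (simp add: D_def)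
  moreover have "sum D (shA p q r) \<le> real (card (shA p q r)) * 1"
  proof (rule sum_bounded_above)
    fix x assume "x \<in> shA p q r"
    hence "x \<in> PP n" using shA_sub[OF rp] assms(2) by auto
    then obtain i j where "x = (i,j)" "i \<in> {1..n}" "j \<in> {1..n}" unfolding PP_def by auto
    thus "D x \<le> 1" unfolding D_def using dot_le1[where n=n and u=u and i=i and j=j] assms(1) by simp
  qed
  ultimately show ?thesis unfolding eq using card_shA[OF assms(3)] by simp
qed


lemma sum_sign: "(\<Sum>i=1..m. (if i \<le> q then -1 else 1::real)) = real m - 2 * real (min m q)"
  by (induction m) (auto simp: min_def)

lemma ip_val:
  assumes "n = p + q" "p = q + 2 * r + 1"
  defines "x \<equiv> restrict (\<lambda>i. if i \<le> q then -1 else 1::real) {1..n}"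
  shows "(\<Sum>(i,j)\<in>clique_web p q r. (-1) * x i * x j) = real q * (real r + 1)"
proof -
  define f where "f = (\<lambda>(i,j). (-1) * x i * x j)"
  have rp: "r < p" and rp2: "2 * r < p" using assms by auto
  have eq: "(\<Sum>(i,j)\<in>clique_web p q r. (-1) * x i * x j) = sum f (clique_web p q r)"
    by (simp add: f_def)
  have "sum f (clique_web p q r) = sum f (PP n) - sum f (shA p q r)"
    unfolding CW_eq[OF rp] assms(1) by (rule sum_diff) (auto simp: PP_finite shA_sub[OF rp])
  moreover have "sum f (PP n) = - (\<Sum>(i,j)\<in>PP n. x i * x j)"
    by (simp add: f_def split_def sum_negf)
  moreover have "(\<Sum>(i,j)\<in>PP n. x i * x j) = ((\<Sum>i=1..n. x i)^2 - (\<Sum>i=1..n. (x i)^2)) / 2"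
    by (rule pair_sum)
  moreover have "(\<Sum>i=1..n. x i) = real p - real q"
  proof -
    have "(\<Sum>i=1..n. x i) = (\<Sum>i=1..n. (if i \<le> q then -1 else 1::real))"
      unfolding x_def by (intro sum.cong) auto
    moreover have "(\<Sum>i=1..n. (if i \<le> q then -1 else 1::real)) = real n - 2 * real (min n q)" by (rule sum_sign)
    moreover have "min n q = q" using assms(1) by simp
    ultimately show ?thesis using assms(1) by simp
  qed
  moreover have "(\<Sum>i=1..n. (x i)^2) = real n"
  proof -
    have "(\<Sum>i=1..n. (x i)^2) = (\<Sum>i=1..n. 1)"
      unfolding x_def by (intro sum.cong) auto
    thus ?thesis by simp
  qed
  moreover have "sum f (shA p q r) = (\<Sum>y\<in>shA p q r. -1)"
  proof (intro sum.cong refl)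
    fix y assume y: "y \<in> shA p q r"
    obtain a b where yab: "y = (a,b)" by force
    have "q \<le> a" "q \<le> b" "(a-q, b-q) \<in> antiweb p r" using y yab by (auto simp: shA_mem)
    moreover have "(a,b) \<in> PP n" using y yab shA_sub[OF rp] assms(1) by auto
    ultimately have "q < a" "q < b" "a \<le> n" "b \<le> n" using antiweb_sub[OF rp] unfolding PP_def by auto
    thus "f y = -1" unfolding f_def yab x_def by auto
  qed
  moreover have "(\<Sum>y\<in>shA p q r. -1::real) = - real (p * r)" using card_shA[OF rp2] by simp
  ultimately have "sum f (clique_web p q r) = - (((real p - real q)^2 - real n) / 2) + real (p * r)"
    by simp
  also have "\<dots> = real q * (real r + 1)" using assms(1,2) by (simp add: power2_eq_square field_simps)
  finally show ?thesis using eq by simp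
qed

lemma arith_aux: assumes "0 \<le> (r::real)" "2 * (r * r) + r \<le> q * r" "2 * r + 1 \<le> q" shows
 "(2 * q + 2 * r + 1) / 2 + (q * r + 2 * (r * r) + r) \<le> 2 * (q * r) + 2 * q"
proof -
  have e: "(2 * q + 2 * r + 1) / 2 = q + r + 1/2" by simp
  show ?thesis unfolding e using assms by linarith
qed

theorem mainTheorem10:
  fixes p q r n :: nat
  assumes "q \<ge> 2" and "p = q + 2 * r + 1" and "n = p + q" and "q \<ge> 2 * r + 1"
  shows "sdp n (clique_web p q r) (\<lambda>_. -1) / ip n (clique_web p q r) (\<lambda>_. -1) \<le> 2"
proof -
  define V where "V = real q * (real r + 1)"
  define x where "x = restrict (\<lambda>i. if i \<le> q then -1 else 1::real) {1..n}"
  have xin: "x \<in> {1..n} \<rightarrow>\<^sub>E {-1, 1}" unfolding x_def by auto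
  have ipge: "ip n (clique_web p q r) (\<lambda>_. -1) \<ge> V"
  proof -
    have "{(\<Sum>(i, j)\<in>clique_web p q r. (\<lambda>_. -1) (i, j) * x i * x j) | x.
                    x \<in> {1..n} \<rightarrow>\<^sub>E {-1::real, 1}}
      = (\<lambda>x. \<Sum>(i, j)\<in>clique_web p q r. (-1) * x i * x j) ` ({1..n} \<rightarrow>\<^sub>E {-1, 1})"
      by auto
    moreover have "finite ((\<lambda>x. \<Sum>(i, j)\<in>clique_web p q r. (-1) * x i * x j) ` ({1..n} \<rightarrow>\<^sub>E {-1::real, 1}))"
      by (intro finite_imageI finite_PiE) auto
    moreover have "(\<lambda>x. \<Sum>(i, j)\<in>clique_web p q r. (-1) * x i * x j) x = V"
      using ip_val[OF assms(3,2)] unfolding V_def x_def by simp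
    hence "V \<in> (\<lambda>x. \<Sum>(i, j)\<in>clique_web p q r. (-1) * x i * x j) ` ({1..n} \<rightarrow>\<^sub>E {-1::real, 1})"
      by (rule image_eqI[OF sym xin])
    ultimately show ?thesis unfolding ip_def by (simp only: Max_ge)
  qed
  have sdple: "sdp n (clique_web p q r) (\<lambda>_. -1) \<le> real n / 2 + real (p * r)"
    unfolding sdp_def
  proof (rule cSup_least)
    let ?u = "\<lambda>(i::nat) (k::nat). if k = 0 then 1 else (0::real)"
    have "n > 0" using assms by simp
    have "\<And>i. (\<Sum>k<n. (?u i k)\<^sup>2) = (\<Sum>k<n. if k = 0 then 1 else (0::real))" by (intro sum.cong) auto
    hence h: "\<forall>i\<in>{1..n}. (\<Sum>k<n. (?u i k)\<^sup>2) = 1" using \<open>n > 0\<close> by simp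
    have "(\<Sum>(i, j)\<in>clique_web p q r. (\<lambda>_. -1::real) (i, j) * (\<Sum>k<n. ?u i k * ?u j k)) \<in> {(\<Sum>(i, j)\<in>clique_web p q r. (\<lambda>_. -1::real) (i, j) * (\<Sum>k<n. u i k * u j k)) | u.
                     \<forall>i\<in>{1..n}. (\<Sum>k<n. (u i k)\<^sup>2) = 1}"
      by (rule CollectI, rule exI[of _ ?u], rule conjI[OF refl], rule h)
    thus "{(\<Sum>(i, j)\<in>clique_web p q r. (\<lambda>_. -1::real) (i, j) * (\<Sum>k<n. u i k * u j k)) | u.
                     \<forall>i\<in>{1..n}. (\<Sum>k<n. (u i k)\<^sup>2) = 1} \<noteq> {}" by (metis empty_iff)
  next
    fix y assume "y \<in> {(\<Sum>(i, j)\<in>clique_web p q r. (\<lambda>_. -1::real) (i, j) * (\<Sum>k<n. u i k * u j k)) | u.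
                     \<forall>i\<in>{1..n}. (\<Sum>k<n. (u i k)\<^sup>2) = 1}"
    then obtain u where u: "\<forall>i\<in>{1..n}. (\<Sum>k<n. (u i k)\<^sup>2) = 1"
      and y: "y = (\<Sum>(i, j)\<in>clique_web p q r. (-1) * (\<Sum>k<n. u i k * u j k))" by auto
    show "y \<le> real n / 2 + real (p * r)" unfolding y
      by (rule sdp_val[OF u assms(3)]) (use assms in simp)
  qed
  have key: "real n / 2 + real (p * r) \<le> 2 * V"
  proof -
    have h0: "real q * real r \<ge> (2 * real r + 1) * real r" using assms(4) by (intro mult_right_mono) auto
    have h1: "2 * (real r * real r) + real r \<le> real q * real r" using h0 by (simp add: algebra_simps)
    have h2: "real q \<ge> 2 * real r + 1" using assms(4) by simp
    have n': "real n = 2 * real q + 2 * real r + 1" using assms(2,3) by simp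
    have pr': "real (p * r) = real q * real r + 2 * (real r * real r) + real r" using assms(2) by (simp add: algebra_simps)
    have v': "2 * V = 2 * (real q * real r) + 2 * real q" unfolding V_def by (simp add: algebra_simps)
    have "real r \<ge> 0" by simp
    thus ?thesis unfolding v' n' pr' using arith_aux[OF _ h1 h2] by blast
  qed
  have Vpos: "V > 0" unfolding V_def using assms(1) by simp
  have "sdp n (clique_web p q r) (\<lambda>_. -1) \<le> 2 * ip n (clique_web p q r) (\<lambda>_. -1)"
    using sdple key ipge by linarith
  moreover have "ip n (clique_web p q r) (\<lambda>_. -1) > 0" using ipge Vpos by linarith
  ultimately show ?thesis by (simp add: divide_le_eq)
qed

end
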